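(* Let $f(n,k)$ denote the number of standard Young tableaux with $n$ cells whose entry in row $1$, column $2$ is $k$, and let $t_m$ denote the number of involutions of $[m]$ (with $t_0=1$ and $t_m=0$ for $m<0$). Then for $1\le k\le n$, \[f(n,k)=\sum_{j=0}^{k-1}\binom{n-k}{k-j-1}t_{n-2k+j+2}-\binom{n-k}{k-1}t_{n-2k+1}-\binom{n-k}{k}t_{n-2k},\] where $\binom{a}{b}=0$ if $b>a$ or $b<0$.
   Context: $t_m$ also equals the number of standard Young tableaux with $m$ cells. A standard Young tableau with $n$ cells is a Ferrers diagram of a partition of $n$ filled bijectively with $1,\dots,n$, entries increasing along rows and down columns. *)

theory Defs
  imports Main "HOL-Library.FuncSet"
begin

text \<open>Partitions of n: weakly decreasing lists of positive naturals summing to n.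
  Rows and columns are indexed from 0, so row 1 column 2 is the cell (0,1).\<close>

definition is_partition :: "nat list \<Rightarrow> nat \<Rightarrow> bool" where
  "is_partition lam n \<longleftrightarrow> sorted_wrt (\<ge>) lam \<and> 0 \<notin> set lam \<and> sum_list lam = n"

definition cells :: "nat list \<Rightarrow> (nat \<times> nat) set" where
  "cells lam = {(i, j). i < length lam \<and> j < lam ! i}"

text \<open>T is taken extensional (undefined outside the cells) so that tableaux are counted once.\<close>

definition is_SYT :: "nat \<Rightarrow> nat list \<Rightarrow> (nat \<times> nat \<Rightarrow> nat) \<Rightarrow> bool" where
  "is_SYT n lam T \<longleftrightarrow> is_partition lam n \<and>
     T \<in> cells lam \<rightarrow>\<^sub>E {1..n} \<and> bij_betw T (cells lam) {1..n} \<and>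
     (\<forall>i j. (i, j) \<in> cells lam \<and> (i, Suc j) \<in> cells lam \<longrightarrow> T (i, j) < T (i, Suc j)) \<and>
     (\<forall>i j. (i, j) \<in> cells lam \<and> (Suc i, j) \<in> cells lam \<longrightarrow> T (i, j) < T (Suc i, j))"

definition f_syt :: "nat \<Rightarrow> nat \<Rightarrow> nat" where
  "f_syt n k = card {(lam, T). is_SYT n lam T \<and> (0, 1) \<in> cells lam \<and> T (0, 1) = k}"

definition involutions :: "nat \<Rightarrow> (nat \<Rightarrow> nat) set" where
  "involutions m = {p \<in> {1..m} \<rightarrow>\<^sub>E {1..m}. \<forall>x\<in>{1..m}. p (p x) = x}"

definition t_inv :: "int \<Rightarrow> int" where
  "t_inv m = (if m < 0 then 0 else int (card (involutions (nat m))))"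

definition binom :: "int \<Rightarrow> int \<Rightarrow> int" where
  "binom a b = (if b < 0 \<or> b > a \<or> a < 0 then 0 else int (nat a choose nat b))"

end

theory Submission
  imports Defs
begin


definition dc :: "(nat \<times> nat) set \<Rightarrow> bool" where
  "dc S \<longleftrightarrow> (\<forall>i j i' j'. (i,j) \<in> S \<longrightarrow> i' \<le> i \<longrightarrow> j' \<le> j \<longrightarrow> (i',j') \<in> S)"

definition valid :: "(nat \<times> nat) set \<Rightarrow> bool" where
  "valid S \<longleftrightarrow> finite S \<and> dc S"

definition addc :: "(nat \<times> nat) set \<Rightarrow> (nat \<times> nat) set" where
  "addc S = {c. c \<notin> S \<and> dc (insert c S)}"

definition remc :: "(nat \<times> nat) set \<Rightarrow> (nat \<times> nat) set" where
  "remc S = {c. c \<in> S \<and> dc (S - {c})}"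

definition rw :: "(nat \<times> nat) set \<Rightarrow> nat \<Rightarrow> nat" where
  "rw S i = card {j. (i,j) \<in> S}"

lemma dcnat:
  fixes B :: "nat set"
  assumes "finite B" "\<forall>x\<in>B. \<forall>y\<le>x. y \<in> B"
  shows "B = {..<card B}"
proof (cases "B = {}")
  case True then show ?thesis by simp
next
  case False
  have "B = {..Max B}" using assms False
    by (auto intro: Max_ge) (meson Max_in assms(1) False)
  then show ?thesis by (metis card_atMost lessThan_Suc_atMost)
qed

lemma rowchar:
  assumes "valid S"
  shows "(i,j) \<in> S \<longleftrightarrow> j < rw S i"
proof -
  let ?B = "{j. (i,j) \<in> S}"
  have fin: "finite ?B"
  proof -
    have "?B \<subseteq> snd ` S" by force
    then show ?thesis using assms unfolding valid_def by (meson finite_surj)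
  qed
  have "\<forall>x\<in>?B. \<forall>y\<le>x. y \<in> ?B" using assms unfolding valid_def dc_def by auto
  then have "?B = {..<card ?B}" using dcnat fin by blast
  then show ?thesis unfolding rw_def by (metis lessThan_iff mem_Collect_eq)
qed

lemma rw_anti:
  assumes "valid S" "i \<le> i'"
  shows "rw S i' \<le> rw S i"
proof -
  have "\<And>j. j < rw S i' \<Longrightarrow> j < rw S i"
    using assms rowchar[OF assms(1)] unfolding valid_def dc_def by blast
  then show ?thesis by (meson not_le less_irrefl)
qed

lemma addc_char:
  assumes "valid S"
  shows "c \<in> addc S \<longleftrightarrow> (\<exists>i. c = (i, rw S i) \<and> (i = 0 \<or> rw S i < rw S (i-1)))"
proof
  assume "c \<in> addc S"
  then obtain i j where c: "c = (i,j)" "(i,j) \<notin> S" "dc (insert (i,j) S)"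
    unfolding addc_def by (cases c) auto
  have j1: "rw S i \<le> j" using c(2) rowchar[OF assms] by simp
  have j2: "j \<le> rw S i"
  proof (cases j)
    case (Suc j')
    have "(i,j') \<in> insert (i,j) S" using c(3)[unfolded dc_def, rule_format, of i j i j'] Suc by simp
    then have "(i,j') \<in> S" using Suc by simp
    then show ?thesis using rowchar[OF assms] Suc by simp
  qed simp
  have "i = 0 \<or> rw S i < rw S (i-1)"
  proof (cases i)
    case (Suc i')
    have "(i',j) \<in> insert (i,j) S" using c(3)[unfolded dc_def, rule_format, of i j i' j] Suc by simp
    then have "(i',j) \<in> S" using Suc by simp
    then show ?thesis using rowchar[OF assms] Suc j1 j2 by simp
  qed simp
  then show "\<exists>i. c = (i, rw S i) \<and> (i = 0 \<or> rw S i < rw S (i-1))" using c j1 j2 by auto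
next
  assume "\<exists>i. c = (i, rw S i) \<and> (i = 0 \<or> rw S i < rw S (i-1))"
  then obtain i where c: "c = (i, rw S i)" "i = 0 \<or> rw S i < rw S (i-1)" by blast
  have "c \<notin> S" using c rowchar[OF assms] by simp
  moreover have "dc (insert c S)"
    unfolding dc_def
  proof (intro allI impI)
    fix a b a' b'
    assume h: "(a,b) \<in> insert c S" "a' \<le> a" "b' \<le> b"
    show "(a',b') \<in> insert c S"
    proof (cases "(a,b) \<in> S")
      case True then show ?thesis using h assms unfolding valid_def dc_def by blast
    next
      case False
      then have ab: "a = i" "b = rw S i" using h c by auto
      show ?thesis
      proof (cases "a' = i")
        case True
        then show ?thesis using ab h rowchar[OF assms] c(1) by (cases "b' = b") auto
      next
        case False
        then have "a' < i" using ab h by simp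
        then have "i \<noteq> 0" by simp
        then have "b' < rw S (i-1)" using c ab h by simp
        moreover have "rw S (i-1) \<le> rw S a'" using rw_anti[OF assms] \<open>a' < i\<close> by simp
        ultimately show ?thesis using rowchar[OF assms] by simp
      qed
    qed
  qed
  ultimately show "c \<in> addc S" unfolding addc_def by simp
qed

lemma remc_char:
  assumes "valid S"
  shows "c \<in> remc S \<longleftrightarrow> (\<exists>i. c = (i, rw S i - 1) \<and> 0 < rw S i \<and> rw S (Suc i) < rw S i)"
proof
  assume "c \<in> remc S"
  then obtain i j where c: "c = (i,j)" "(i,j) \<in> S" "dc (S - {(i,j)})"
    unfolding remc_def by (cases c) auto
  have j1: "j < rw S i" using c(2) rowchar[OF assms] by simp
  have j2: "\<not> Suc j < rw S i"
  proof
    assume "Suc j < rw S i"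
    then have "(i, Suc j) \<in> S - {(i,j)}" using rowchar[OF assms] by simp
    then have "(i,j) \<in> S - {(i,j)}" using c(3)[unfolded dc_def, rule_format, of i "Suc j" i j] by simp
    then show False by simp
  qed
  have j3: "\<not> rw S i \<le> rw S (Suc i)"
  proof
    assume "rw S i \<le> rw S (Suc i)"
    then have "(Suc i, j) \<in> S - {(i,j)}" using rowchar[OF assms] j1 by simp
    then have "(i,j) \<in> S - {(i,j)}" using c(3)[unfolded dc_def, rule_format, of "Suc i" j i j] by simp
    then show False by simp
  qed
  show "\<exists>i. c = (i, rw S i - 1) \<and> 0 < rw S i \<and> rw S (Suc i) < rw S i"
    using c j1 j2 j3 by (intro exI[of _ i]) auto
next
  assume "\<exists>i. c = (i, rw S i - 1) \<and> 0 < rw S i \<and> rw S (Suc i) < rw S i"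
  then obtain i where c: "c = (i, rw S i - 1)" "0 < rw S i" "rw S (Suc i) < rw S i" by blast
  have "c \<in> S" using c rowchar[OF assms] by simp
  moreover have "dc (S - {c})"
    unfolding dc_def
  proof (intro allI impI)
    fix a b a' b'
    assume h: "(a,b) \<in> S - {c}" "a' \<le> a" "b' \<le> b"
    have "(a',b') \<in> S" using h assms unfolding valid_def dc_def by blast
    moreover have "(a',b') \<noteq> c"
    proof
      assume e: "(a',b') = c"
      then have a'i: "a' = i" "b' = rw S i - 1" using c by auto
      have bl: "b < rw S a" using h rowchar[OF assms] by simp
      show False
      proof (cases "a = i")
        case True
        then show False using h a'i bl c by auto
      next
        case False
        then have "Suc i \<le> a" using h a'i by simp
        then have "rw S a \<le> rw S (Suc i)" using rw_anti[OF assms] by simp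
        then show False using bl h a'i c by simp
      qed
    qed
    ultimately show "(a',b') \<in> S - {c}" by simp
  qed
  ultimately show "c \<in> remc S" unfolding remc_def by simp
qed

lemma Ir_fin:
  assumes "valid S"
  shows "finite {i. rw S (Suc i) < rw S i}"
proof -
  have "{i. rw S (Suc i) < rw S i} \<subseteq> fst ` S"
  proof
    fix i assume "i \<in> {i. rw S (Suc i) < rw S i}"
    then have "(i,0) \<in> S" using rowchar[OF assms] by simp
    then show "i \<in> fst ` S" by force
  qed
  then show ?thesis using assms unfolding valid_def by (meson finite_surj)
qed

lemma addc_eq:
  assumes "valid S"
  shows "addc S = (\<lambda>i. (i, rw S i)) ` insert 0 (Suc ` {i. rw S (Suc i) < rw S i})"
proof -
  have 1: "addc S = {c. \<exists>i. c = (i, rw S i) \<and> (i = 0 \<or> rw S i < rw S (i-1))}"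
    using addc_char[OF assms] by (intro set_eqI) simp
  have 2: "{i. i = 0 \<or> rw S i < rw S (i-1)} = insert 0 (Suc ` {i. rw S (Suc i) < rw S i})"
  proof (intro set_eqI iffI)
    fix i assume "i \<in> {i. i = 0 \<or> rw S i < rw S (i-1)}"
    then show "i \<in> insert 0 (Suc ` {i. rw S (Suc i) < rw S i})"
      by (cases i) auto
  qed auto
  have 3: "{c. \<exists>i. c = (i, rw S i) \<and> (i = 0 \<or> rw S i < rw S (i-1))}
      = (\<lambda>i. (i, rw S i)) ` {i. i = 0 \<or> rw S i < rw S (i-1)}" by (auto simp: image_iff)
  show ?thesis unfolding 1 3 2 ..
qed

lemma remc_eq:
  assumes "valid S"
  shows "remc S = (\<lambda>i. (i, rw S i - 1)) ` {i. rw S (Suc i) < rw S i}"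
proof -
  have 1: "remc S = {c. \<exists>i. c = (i, rw S i - 1) \<and> 0 < rw S i \<and> rw S (Suc i) < rw S i}"
    using remc_char[OF assms] by (intro set_eqI) simp
  show ?thesis unfolding 1 by (auto simp: image_iff)
qed

lemma finite_addc: "valid S \<Longrightarrow> finite (addc S)"
  using addc_eq Ir_fin by simp

lemma finite_remc: "valid S \<Longrightarrow> finite (remc S)"
  using remc_eq Ir_fin by simp

lemma card_addc: 
  assumes "valid S" shows "card (addc S) = Suc (card (remc S))"
proof -
  let ?I = "{i. rw S (Suc i) < rw S i}"
  have "card (addc S) = card (insert 0 (Suc ` ?I))"
    unfolding addc_eq[OF assms] by (rule card_image) (auto simp: inj_on_def)
  also have "\<dots> = Suc (card (Suc ` ?I))" using Ir_fin[OF assms] by (subst card_insert_disjoint) auto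
  also have "\<dots> = Suc (card ?I)" by (simp add: card_image)
  also have "card ?I = card (remc S)"
    unfolding remc_eq[OF assms] by (rule card_image[symmetric]) (auto simp: inj_on_def)
  finally show ?thesis .
qed



definition Uop :: "((nat \<times> nat) set \<Rightarrow> int) \<Rightarrow> (nat \<times> nat) set \<Rightarrow> int" where
  "Uop f S = (\<Sum>c\<in>addc S. f (insert c S))"

definition Dop :: "((nat \<times> nat) set \<Rightarrow> int) \<Rightarrow> (nat \<times> nat) set \<Rightarrow> int" where
  "Dop f S = (\<Sum>d\<in>remc S. f (S - {d}))"

lemma dc_Un: "dc A \<Longrightarrow> dc B \<Longrightarrow> dc (A \<union> B)" unfolding dc_def by blast
lemma dc_Int: "dc A \<Longrightarrow> dc B \<Longrightarrow> dc (A \<inter> B)" unfolding dc_def by blast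

lemma valid_add: "valid S \<Longrightarrow> c \<in> addc S \<Longrightarrow> valid (insert c S)"
  unfolding valid_def addc_def by auto
lemma valid_rem: "valid S \<Longrightarrow> d \<in> remc S \<Longrightarrow> valid (S - {d})"
  unfolding valid_def remc_def by auto

lemma add_rem_self: "valid S \<Longrightarrow> c \<in> addc S \<Longrightarrow> c \<in> remc (insert c S)"
  unfolding valid_def addc_def remc_def by auto
lemma rem_add_self: "valid S \<Longrightarrow> d \<in> remc S \<Longrightarrow> d \<in> addc (S - {d})"
  unfolding valid_def addc_def remc_def by (auto simp: insert_absorb)

lemma XY:
  assumes "valid S"
  shows "(c \<in> addc S \<and> d \<in> remc (insert c S) \<and> d \<noteq> c) \<longleftrightarrow>
         (d \<in> remc S \<and> c \<in> addc (S - {d}) \<and> c \<noteq> d)"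
proof
  assume h: "c \<in> addc S \<and> d \<in> remc (insert c S) \<and> d \<noteq> c"
  then have cS: "c \<notin> S" "dc (insert c S)" and dS: "d \<in> S" "dc (insert c S - {d})"
    unfolding addc_def remc_def by auto
  have "S - {d} = S \<inter> (insert c S - {d})" using cS by auto
  then have "dc (S - {d})" using dc_Int dS assms unfolding valid_def by metis
  moreover have "insert c (S - {d}) = insert c S - {d}" using h by auto
  ultimately show "d \<in> remc S \<and> c \<in> addc (S - {d}) \<and> c \<noteq> d"
    using h dS cS unfolding addc_def remc_def by auto
next
  assume h: "d \<in> remc S \<and> c \<in> addc (S - {d}) \<and> c \<noteq> d"
  then have dS: "d \<in> S" "dc (S - {d})" and cS: "c \<notin> S" "dc (insert c (S - {d}))"
    unfolding addc_def remc_def by auto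
  have "insert c S = S \<union> insert c (S - {d})" using dS by auto
  then have "dc (insert c S)" using dc_Un cS assms unfolding valid_def by metis
  moreover have "insert c (S - {d}) = insert c S - {d}" using h by auto
  ultimately show "c \<in> addc S \<and> d \<in> remc (insert c S) \<and> d \<noteq> c"
    using h dS cS unfolding addc_def remc_def by auto
qed

lemma comm:
  assumes S: "valid S"
  shows "Uop (Dop f) S = Dop (Uop f) S + f S"
proof -
  let ?X = "SIGMA c:addc S. remc (insert c S) - {c}"
  let ?Y = "SIGMA d:remc S. addc (S - {d}) - {d}"
  have finA: "finite (addc S)" "finite (remc S)" using S finite_addc finite_remc by auto
  have e1: "Uop (Dop f) S = (\<Sum>c\<in>addc S. f S + (\<Sum>d\<in>remc (insert c S) - {c}. f (insert c S - {d})))"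
    unfolding Uop_def Dop_def
  proof (rule sum.cong[OF refl])
    fix c assume c: "c \<in> addc S"
    have v: "valid (insert c S)" using valid_add S c by blast
    have "c \<in> remc (insert c S)" using add_rem_self S c by blast
    moreover have "insert c S - {c} = S" using c unfolding addc_def by auto
    ultimately show "(\<Sum>d\<in>remc (insert c S). f (insert c S - {d})) =
        f S + (\<Sum>d\<in>remc (insert c S) - {c}. f (insert c S - {d}))"
      using finite_remc[OF v] by (simp add: sum.remove)
  qed
  have e2: "Dop (Uop f) S = (\<Sum>d\<in>remc S. f S + (\<Sum>c\<in>addc (S - {d}) - {d}. f (insert c (S - {d}))))"
    unfolding Uop_def Dop_def
  proof (rule sum.cong[OF refl])
    fix d assume d: "d \<in> remc S"
    have v: "valid (S - {d})" using valid_rem S d by blast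
    have "d \<in> addc (S - {d})" using rem_add_self S d by blast
    moreover have "insert d (S - {d}) = S" using d unfolding remc_def by auto
    ultimately show "(\<Sum>c\<in>addc (S - {d}). f (insert c (S - {d}))) =
        f S + (\<Sum>c\<in>addc (S - {d}) - {d}. f (insert c (S - {d})))"
      using finite_addc[OF v] by (simp add: sum.remove)
  qed
  have sX: "(\<Sum>c\<in>addc S. (\<Sum>d\<in>remc (insert c S) - {c}. f (insert c S - {d}))) =
            (\<Sum>(c,d)\<in>?X. f (insert c S - {d}))"
    using finA by (intro sum.Sigma) (auto intro!: finite_remc valid_add[OF S])
  have sY: "(\<Sum>d\<in>remc S. (\<Sum>c\<in>addc (S - {d}) - {d}. f (insert c (S - {d})))) =
            (\<Sum>(d,c)\<in>?Y. f (insert c (S - {d})))"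
    using finA by (intro sum.Sigma) (auto intro!: finite_addc valid_rem[OF S])
  have XYeq: "(\<Sum>(c,d)\<in>?X. f (insert c S - {d})) = (\<Sum>(d,c)\<in>?Y. f (insert c (S - {d})))"
  proof (rule sum.reindex_bij_witness[of _ "\<lambda>(d,c). (c,d)" "\<lambda>(c,d). (d,c)"])
    fix a assume "a \<in> ?Y"
    then obtain d c where a: "a = (d,c)" "d \<in> remc S" "c \<in> addc (S - {d}) - {d}" by blast
    then have "c \<in> addc S \<and> d \<in> remc (insert c S) \<and> d \<noteq> c" using XY[OF S, of c d] by blast
    then show "(case a of (d, c) \<Rightarrow> (c, d)) \<in> ?X" using a by simp
    show "(case case a of (d, c) \<Rightarrow> (c, d) of (c, d) \<Rightarrow> (d, c)) = a" using a by simp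
  next
    fix a assume "a \<in> ?X"
    then obtain d c where a: "a = (c,d)" "c \<in> addc S" "d \<in> remc (insert c S) - {c}" by blast
    then have "d \<in> remc S \<and> c \<in> addc (S - {d}) \<and> c \<noteq> d" using XY[OF S, of c d] by blast
    then show "(case a of (c, d) \<Rightarrow> (d, c)) \<in> ?Y" using a by simp
    show "(case case a of (c, d) \<Rightarrow> (d, c) of (d, c) \<Rightarrow> (c, d)) = a" using a by simp
    have "insert c (S - {d}) = insert c S - {d}" using a by auto
    then show "(case case a of (c, d) \<Rightarrow> (d, c) of (d, c) \<Rightarrow> f (insert c (S - {d}))) =
         (case a of (c, d) \<Rightarrow> f (insert c S - {d}))" using a by simp
  qed
  have "Uop (Dop f) S = of_nat (card (addc S)) * f S + (\<Sum>(c,d)\<in>?X. f (insert c S - {d}))"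
    using e1 sX by (simp add: sum.distrib)
  moreover have "Dop (Uop f) S = of_nat (card (remc S)) * f S + (\<Sum>(d,c)\<in>?Y. f (insert c (S - {d})))"
    using e2 sY by (simp add: sum.distrib)
  ultimately show ?thesis using XYeq card_addc[OF S] by (simp add: algebra_simps)
qed

lemma Dop_cong:
  assumes "\<And>S'. valid S' \<Longrightarrow> f S' = g S'" "valid S"
  shows "Dop f S = Dop g S"
  unfolding Dop_def
proof (rule sum.cong[OF refl])
  fix d assume "d \<in> remc S"
  then show "f (S - {d}) = g (S - {d})" using assms valid_rem by blast
qed

lemma Uop_cong:
  assumes "\<And>S'. valid S' \<Longrightarrow> f S' = g S'" "valid S"
  shows "Uop f S = Uop g S"
  unfolding Uop_def
proof (rule sum.cong[OF refl])
  fix d assume "d \<in> addc S"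
  then show "f (insert d S) = g (insert d S)" using assms valid_add by blast
qed

lemma Dop_add: "Dop (\<lambda>S. f S + g S) = (\<lambda>S. Dop f S + Dop g S)"
  unfolding Dop_def by (simp add: sum.distrib)
lemma Dop_smult: "Dop (\<lambda>S. a * f S) = (\<lambda>S. a * Dop f S)"
  unfolding Dop_def by (simp add: sum_distrib_left)

lemma Dpow_cong:
  assumes "\<And>S'. valid S' \<Longrightarrow> f S' = g S'"
  shows "valid S \<Longrightarrow> (Dop ^^ k) f S = (Dop ^^ k) g S"
proof (induction k arbitrary: S)
  case 0 then show ?case using assms by simp
next
  case (Suc k)
  have "Dop ((Dop ^^ k) f) S = Dop ((Dop ^^ k) g) S"
    by (rule Dop_cong[OF Suc.IH Suc.prems])
  then show ?case by simp
qed

lemma Dpow_add: "(Dop ^^ k) (\<lambda>S. f S + g S) = (\<lambda>S. (Dop ^^ k) f S + (Dop ^^ k) g S)"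
  by (induction k) (simp_all add: Dop_add)

lemma comm_k:
  assumes "valid S"
  shows "Uop ((Dop ^^ k) f) S = (Dop ^^ k) (Uop f) S + of_nat k * (Dop ^^ (k - 1)) f S"
  using assms
proof (induction k arbitrary: S)
  case 0 then show ?case by simp
next
  case (Suc k)
  have "Uop ((Dop ^^ Suc k) f) S = Dop (Uop ((Dop ^^ k) f)) S + (Dop ^^ k) f S"
    using comm[OF Suc.prems] by simp
  also have "Dop (Uop ((Dop ^^ k) f)) S =
      Dop (\<lambda>S. (Dop ^^ k) (Uop f) S + of_nat k * (Dop ^^ (k - 1)) f S) S"
    using Suc by (intro Dop_cong) auto
  also have "\<dots> = (Dop ^^ Suc k) (Uop f) S + of_nat k * Dop ((Dop ^^ (k - 1)) f) S"
    by (simp add: Dop_add Dop_smult)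
  also have "of_nat k * Dop ((Dop ^^ (k - 1)) f) S = of_nat k * (Dop ^^ k) f S"
    by (cases k) auto
  finally show ?case by (simp add: algebra_simps)
qed

definition Dn :: "(nat \<times> nat) set \<Rightarrow> nat \<Rightarrow> int" where
  "Dn S i = (Dop ^^ i) (\<lambda>_. 1) S"

lemma U1: "valid S \<Longrightarrow> Uop (\<lambda>_. 1) S = Dop (\<lambda>_. 1) S + 1"
  unfolding Uop_def Dop_def using card_addc by simp

lemma E_lemma:
  assumes "valid S"
  shows "Uop (\<lambda>S'. Dn S' i) S = Dn S (Suc i) + Dn S i + of_nat i * Dn S (i - 1)"
proof -
  have "Uop (\<lambda>S'. Dn S' i) S = (Dop ^^ i) (Uop (\<lambda>_. 1)) S + of_nat i * Dn S (i - 1)"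
    using comm_k[OF assms, of i "\<lambda>_. 1"] unfolding Dn_def by (simp add: eta_contract_eq)
  also have "(Dop ^^ i) (Uop (\<lambda>_. 1)) S = (Dop ^^ i) (\<lambda>S. Dop (\<lambda>_. 1) S + 1) S"
    using U1 assms by (intro Dpow_cong) auto
  also have "\<dots> = (Dop ^^ i) (Dop (\<lambda>_. 1)) S + Dn S i"
    unfolding Dn_def by (subst Dpow_add) (simp add: eta_contract_eq)
  also have "(Dop ^^ i) (Dop (\<lambda>_. 1)) S = Dn S (Suc i)"
    unfolding Dn_def by (simp add: funpow_Suc_right del: funpow.simps)
  finally show ?thesis by simp
qed



fun Tn :: "nat \<Rightarrow> nat" where
  "Tn 0 = 1" | "Tn (Suc 0) = 1" | "Tn (Suc (Suc n)) = Tn (Suc n) + Suc n * Tn n"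

lemma Tn_Suc: "Tn (Suc m) = Tn m + m * Tn (m - 1)"
  by (cases m) auto

lemma binom_shift: "Suc k * (N choose Suc k) = (N - k) * (N choose k)"
proof (cases N)
  case 0 then show ?thesis by simp
next
  case (Suc m)
  then show ?thesis using Suc_times_binomial[of k m] binomial_absorb_comp[of N k] by simp
qed

lemma alg:
  fixes a :: "nat \<Rightarrow> int"
  shows "(\<Sum>i\<le>N. of_nat (N choose i) * of_nat (Tn (N-i)) * (a (Suc i) + a i + of_nat i * a (i-1)))
       = (\<Sum>i\<le>Suc N. of_nat (Suc N choose i) * of_nat (Tn (Suc N - i)) * a i)"
proof -
  define h where "h i = of_nat (N choose i) * of_nat (Tn (Suc N - i)) * a i" for i
  define q where "q i = of_nat (N choose i) * of_nat (Tn (N - i)) * (of_nat i * a (i-1))" for i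
  have R: "(\<Sum>i\<le>Suc N. of_nat (Suc N choose i) * of_nat (Tn (Suc N - i)) * a i)
      = of_nat (Tn (Suc N)) * a 0 + (\<Sum>i\<le>N. of_nat (N choose i) * of_nat (Tn (N-i)) * a (Suc i))
        + (\<Sum>i\<le>N. of_nat (N choose Suc i) * of_nat (Tn (N-i)) * a (Suc i))"
    by (subst sum.atMost_Suc_shift) (simp add: algebra_simps sum.distrib)
  have H1: "(\<Sum>i\<le>Suc N. h i) = of_nat (Tn (Suc N)) * a 0 + (\<Sum>i\<le>N. of_nat (N choose Suc i) * of_nat (Tn (N-i)) * a (Suc i))"
    unfolding h_def by (subst sum.atMost_Suc_shift) simp
  have H2: "(\<Sum>i\<le>Suc N. h i) = (\<Sum>i\<le>N. h i)"
    unfolding h_def by simp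
  have H3: "(\<Sum>i\<le>N. h i) = (\<Sum>i\<le>N. of_nat (N choose i) * of_nat (Tn (N-i)) * a i)
      + (\<Sum>i\<le>N. of_nat (N choose i) * of_nat (N - i) * of_nat (Tn (N - i - 1)) * a i)"
    unfolding h_def sum.distrib[symmetric]
  proof (rule sum.cong[OF refl])
    fix i assume "i \<in> {..N}"
    then have "Tn (Suc N - i) = Tn (N-i) + (N-i) * Tn (N-i-1)" using Tn_Suc[of "N-i"] by (simp add: Suc_diff_le)
    then show "of_nat (N choose i) * of_nat (Tn (Suc N - i)) * a i =
      of_nat (N choose i) * of_nat (Tn (N - i)) * a i + of_nat (N choose i) * of_nat (N - i) * of_nat (Tn (N - i - 1)) * a i"
      by (simp only: of_nat_add of_nat_mult) (simp add: ring_distribs mult_ac)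
  qed
  have Q1: "(\<Sum>i\<le>Suc N. q i) = (\<Sum>i\<le>N. q i)" unfolding q_def by simp
  have Q2: "(\<Sum>i\<le>Suc N. q i) = (\<Sum>i\<le>N. of_nat (N choose i) * of_nat (N - i) * of_nat (Tn (N - i - 1)) * a i)"
  proof -
    have "(\<Sum>i\<le>Suc N. q i) = (\<Sum>i\<le>N. q (Suc i))" unfolding q_def by (subst sum.atMost_Suc_shift) simp
    also have "\<dots> = (\<Sum>i\<le>N. of_nat (N choose i) * of_nat (N - i) * of_nat (Tn (N - i - 1)) * a i)"
    proof (rule sum.cong[OF refl])
      fix i
      have "of_nat (Suc i) * of_nat (N choose Suc i) = (of_nat (N - i) * of_nat (N choose i) :: int)"
        using binom_shift[of i N] by (metis of_nat_mult)
      show "q (Suc i) = of_nat (N choose i) * of_nat (N - i) * of_nat (Tn (N - i - 1)) * a i"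
      proof -
        have "q (Suc i) = (of_nat (Suc i) * of_nat (N choose Suc i)) * (of_nat (Tn (N - i - 1)) * a i)"
          unfolding q_def by (simp add: mult_ac del: of_nat_Suc)
        also have "\<dots> = (of_nat (N - i) * of_nat (N choose i)) * (of_nat (Tn (N - i - 1)) * a i)"
          by (simp only: \<open>of_nat (Suc i) * of_nat (N choose Suc i) = (of_nat (N - i) * of_nat (N choose i) :: int)\<close>)
        finally show ?thesis by (simp add: mult_ac)
      qed
    qed
    finally show ?thesis .
  qed
  have L: "(\<Sum>i\<le>N. of_nat (N choose i) * of_nat (Tn (N-i)) * (a (Suc i) + a i + of_nat i * a (i-1)))
     = (\<Sum>i\<le>N. of_nat (N choose i) * of_nat (Tn (N-i)) * a (Suc i))
     + (\<Sum>i\<le>N. of_nat (N choose i) * of_nat (Tn (N-i)) * a i) + (\<Sum>i\<le>N. q i)"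
    unfolding q_def by (simp add: algebra_simps sum.distrib)
  show ?thesis using R H1 H2 H3 Q1 Q2 L by simp
qed

fun Pn :: "(nat \<times> nat) set \<Rightarrow> nat \<Rightarrow> int" where
  "Pn S 0 = 1" | "Pn S (Suc N) = (\<Sum>c\<in>addc S. Pn (insert c S) N)"

lemma Pn_formula:
  "valid S \<Longrightarrow> Pn S N = (\<Sum>i\<le>N. of_nat (N choose i) * of_nat (Tn (N-i)) * Dn S i)"
proof (induction N arbitrary: S)
  case 0 then show ?case by (simp add: Dn_def)
next
  case (Suc N)
  have "Pn S (Suc N) = (\<Sum>c\<in>addc S. \<Sum>i\<le>N. of_nat (N choose i) * of_nat (Tn (N-i)) * Dn (insert c S) i)"
    using Suc.IH valid_add[OF Suc.prems] by simp
  also have "\<dots> = (\<Sum>i\<le>N. of_nat (N choose i) * of_nat (Tn (N-i)) * (\<Sum>c\<in>addc S. Dn (insert c S) i))"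
    by (subst sum.swap) (simp add: sum_distrib_left)
  also have "\<dots> = (\<Sum>i\<le>N. of_nat (N choose i) * of_nat (Tn (N-i)) * (Dn S (Suc i) + Dn S i + of_nat i * Dn S (i - 1)))"
    using E_lemma[OF Suc.prems] unfolding Uop_def by simp
  also have "\<dots> = (\<Sum>i\<le>Suc N. of_nat (Suc N choose i) * of_nat (Tn (Suc N - i)) * Dn S i)"
    by (rule alg)
  finally show ?case .
qed



definition colset :: "nat \<Rightarrow> (nat \<times> nat) set" where
  "colset m = (\<lambda>i. (i, 0)) ` {..<m}"

lemma mem_colset: "c \<in> colset m \<longleftrightarrow> snd c = 0 \<and> fst c < m"
  unfolding colset_def by (cases c) auto

lemma valid_colset: "valid (colset m)"
proof -
  have "finite (colset m)" by (simp add: colset_def)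
  then show ?thesis unfolding valid_def dc_def by (auto simp: mem_colset)
qed

lemma remc_colset0: "remc (colset 0) = {}"
  unfolding remc_def by (auto simp: mem_colset)

lemma remc_colsetS: "remc (colset (Suc m)) = {(m,0)}"
proof (intro set_eqI iffI)
  fix c assume c: "c \<in> remc (colset (Suc m))"
  then have "c \<in> colset (Suc m)" "dc (colset (Suc m) - {c})" unfolding remc_def by auto
  then obtain a where a: "c = (a,0)" "a \<le> m" by (cases c) (auto simp: mem_colset)
  show "c \<in> {(m,0)}"
  proof (rule ccontr)
    assume "c \<notin> {(m,0)}"
    then have "(m,0) \<in> colset (Suc m) - {c}" using a by (auto simp: mem_colset)
    then have "(a,0) \<in> colset (Suc m) - {c}"
      using \<open>dc (colset (Suc m) - {c})\<close>[unfolded dc_def, rule_format, of m 0 a 0] a by simp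
    then show False using a by simp
  qed
next
  fix c :: "nat \<times> nat" assume "c \<in> {(m,0)}"
  then have c: "c = (m,0)" by simp
  have "colset (Suc m) - {c} = colset m" using c by (auto simp: mem_colset)
  then show "c \<in> remc (colset (Suc m))" unfolding remc_def using c valid_colset[of m]
    by (auto simp: mem_colset valid_def)
qed

lemma colset_Suc_minus: "colset (Suc m) - {(m,0)} = colset m"
  by (auto simp: mem_colset)

lemma Dn_colset: "Dn (colset m) i = (if i \<le> m then 1 else 0)"
proof (induction i arbitrary: m)
  case 0 then show ?case by (simp add: Dn_def)
next
  case (Suc i)
  have "Dn (colset m) (Suc i) = Dop (\<lambda>S. Dn S i) (colset m)"
    unfolding Dn_def by simp
  also have "\<dots> = (if Suc i \<le> m then 1 else 0)"
  proof (cases m)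
    case 0 then show ?thesis unfolding Dop_def using remc_colset0 by simp
  next
    case (Suc m')
    then show ?thesis unfolding Dop_def using remc_colsetS colset_Suc_minus Suc.IH by simp
  qed
  finally show ?case .
qed

lemma Pn_colset: "Pn (colset m) N = (\<Sum>i\<le>m. of_nat (N choose i) * of_nat (Tn (N - i)))"
proof -
  let ?g = "\<lambda>i. of_nat (N choose i) * of_nat (Tn (N - i)) :: int"
  have "Pn (colset m) N = (\<Sum>i\<le>N. ?g i * (if i \<le> m then 1 else 0))"
    using Pn_formula[OF valid_colset] Dn_colset by simp
  also have "\<dots> = (\<Sum>i\<in>{..min N m}. ?g i)"
    by (rule sum.mono_neutral_cong_right) auto
  also have "\<dots> = (\<Sum>i\<le>m. ?g i)"
    by (rule sum.mono_neutral_left) auto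
  finally show ?thesis .
qed

lemma addc_colset: "addc (colset m) \<subseteq> {(m,0), (0,1)}"
proof
  fix c assume c: "c \<in> addc (colset m)"
  obtain a b where ab: "c = (a,b)" by (cases c)
  have nc: "c \<notin> colset m" and d: "dc (insert c (colset m))" using c unfolding addc_def by auto
  show "c \<in> {(m,0), (0,1)}"
  proof (cases b)
    case 0
    then have "m \<le> a" using nc ab by (auto simp: mem_colset)
    moreover have "\<not> m < a"
    proof
      assume "m < a"
      then have "(m,0) \<in> insert c (colset m)" using d[unfolded dc_def, rule_format, of a b m 0] ab by simp
      then show False using \<open>m < a\<close> ab by (auto simp: mem_colset)
    qed
    ultimately show ?thesis using ab 0 by simp
  next
    case (Suc b')
    then have "(0,1) \<in> insert c (colset m)" using d[unfolded dc_def, rule_format, of a b 0 1] ab by simp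
    then show ?thesis by (auto simp: mem_colset)
  qed
qed



definition paths :: "(nat \<times> nat) set \<Rightarrow> nat \<Rightarrow> (nat \<times> nat) list set" where
  "paths S N = {xs. length xs = N \<and> distinct xs \<and> set xs \<inter> S = {} \<and> (\<forall>j. dc (S \<union> set (take j xs)))}"

lemma paths_0: "dc S \<Longrightarrow> paths S 0 = {[]}"
  unfolding paths_def by auto

lemma paths_cons:
  assumes "dc S"
  shows "(c # ys \<in> paths S (Suc N)) \<longleftrightarrow> (c \<in> addc S \<and> ys \<in> paths (insert c S) N)"
proof
  assume h: "c # ys \<in> paths S (Suc N)"
  have h1: "length ys = N" "distinct ys" "c \<notin> set ys" "c \<notin> S" "set ys \<inter> S = {}"
    and h2: "\<And>j. dc (S \<union> set (take j (c # ys)))"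
    using h unfolding paths_def by auto
  have "dc (S \<union> set (take 1 (c # ys)))" by (rule h2)
  then have "dc (insert c S)" by simp
  then have A: "c \<in> addc S" unfolding addc_def using h1 by simp
  have "dc (insert c S \<union> set (take j ys))" for j
  proof -
    have "dc (S \<union> set (take (Suc j) (c # ys)))" by (rule h2)
    then show "dc (insert c S \<union> set (take j ys))" by simp
  qed
  moreover have "set ys \<inter> insert c S = {}" using h1 by blast
  ultimately have "ys \<in> paths (insert c S) N" unfolding paths_def using h1 by blast
  then show "c \<in> addc S \<and> ys \<in> paths (insert c S) N" using A by blast
next
  assume h: "c \<in> addc S \<and> ys \<in> paths (insert c S) N"
  have h1: "length ys = N" "distinct ys" "set ys \<inter> insert c S = {}" "c \<notin> S"
    and h2: "\<And>j. dc (insert c S \<union> set (take j ys))"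
    using h unfolding paths_def addc_def by auto
  have "dc (S \<union> set (take j (c # ys)))" for j
  proof (cases j)
    case 0 then show ?thesis using assms by simp
  next
    case (Suc j')
    have "dc (insert c S \<union> set (take j' ys))" by (rule h2)
    then show ?thesis using Suc by simp
  qed
  moreover have "length (c # ys) = Suc N" "distinct (c # ys)" "set (c # ys) \<inter> S = {}"
    using h1 by auto
  ultimately show "c # ys \<in> paths S (Suc N)"
    unfolding paths_def by blast
qed

lemma paths_Suc:
  assumes "dc S"
  shows "paths S (Suc N) = (\<lambda>(c,ys). c # ys) ` (SIGMA c:addc S. paths (insert c S) N)"
proof (intro set_eqI iffI)
  fix xs assume xs: "xs \<in> paths S (Suc N)"
  then have "length xs = Suc N" unfolding paths_def by blast
  then obtain c ys where cys: "xs = c # ys" by (cases xs) auto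
  then have "c \<in> addc S" "ys \<in> paths (insert c S) N" using xs paths_cons[OF assms] by auto
  then show "xs \<in> (\<lambda>(c,ys). c # ys) ` (SIGMA c:addc S. paths (insert c S) N)"
    using cys by (intro image_eqI[of _ _ "(c,ys)"]) auto
next
  fix xs assume "xs \<in> (\<lambda>(c,ys). c # ys) ` (SIGMA c:addc S. paths (insert c S) N)"
  then obtain p where p: "p \<in> (SIGMA c:addc S. paths (insert c S) N)" "xs = (\<lambda>(c,ys). c # ys) p" by blast
  obtain c ys where "p = (c, ys)" by (cases p)
  then have "xs = c # ys" "c \<in> addc S" "ys \<in> paths (insert c S) N" using p by auto
  then show "xs \<in> paths S (Suc N)" using paths_cons[OF assms] by simp
qed

lemma card_paths: "valid S \<Longrightarrow> finite (paths S N) \<and> int (card (paths S N)) = Pn S N"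
proof (induction N arbitrary: S)
  case 0 then show ?case using paths_0 by (simp add: valid_def)
next
  case (Suc N)
  have dcS: "dc S" using Suc.prems by (simp add: valid_def)
  have fin: "finite (addc S)" using finite_addc Suc.prems by blast
  have IH: "\<And>c. c \<in> addc S \<Longrightarrow> finite (paths (insert c S) N) \<and> int (card (paths (insert c S) N)) = Pn (insert c S) N"
    using Suc.IH valid_add Suc.prems by blast
  have inj: "inj_on (\<lambda>(c,ys). c # ys) (SIGMA c:addc S. paths (insert c S) N)"
    by (auto simp: inj_on_def)
  have "finite (paths S (Suc N))" unfolding paths_Suc[OF dcS] using fin IH by auto
  moreover have "int (card (paths S (Suc N))) = Pn S (Suc N)"
    unfolding paths_Suc[OF dcS] card_image[OF inj] using fin IH by (simp add: card_SigmaI)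
  ultimately show ?case by blast
qed

lemma paths_append:
  assumes "dc S"
  shows "(pre @ ys \<in> paths S (length pre + b)) \<longleftrightarrow> (pre \<in> paths S (length pre) \<and> ys \<in> paths (S \<union> set pre) b)"
  using assms
proof (induction pre arbitrary: S)
  case Nil then show ?case using paths_0 by simp
next
  case (Cons c pre)
  show ?case
  proof (cases "c \<in> addc S")
    case True
    then have "dc (insert c S)" unfolding addc_def by simp
    then show ?thesis using Cons.IH[of "insert c S"] paths_cons[OF Cons.prems] True by simp
  next
    case False
    then show ?thesis using paths_cons[OF Cons.prems] by simp
  qed
qed

definition collist :: "nat \<Rightarrow> (nat \<times> nat) list" where
  "collist m = map (\<lambda>i. (i, 0)) [0..<m]"

lemma set_collist: "set (collist m) = colset m"
  unfolding collist_def colset_def by auto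

lemma take_collist: "j \<le> m \<Longrightarrow> take j (collist m) = collist j"
  unfolding collist_def by (simp add: take_map)

lemma collist_Suc: "collist (Suc m) = collist m @ [(m,0)]"
  unfolding collist_def by simp

lemma collist_paths: "collist m \<in> paths {} m"
proof -
  have "dc (set (take j (collist m)))" for j
  proof (cases "j \<le> m")
    case True then show ?thesis using take_collist set_collist valid_colset by (simp add: valid_def)
  next
    case False
    then have "take j (collist m) = collist m" by (simp add: collist_def)
    then show ?thesis using set_collist valid_colset by (simp add: valid_def)
  qed
  moreover have "distinct (collist m)" unfolding collist_def by (simp add: distinct_map inj_on_def)
  ultimately show ?thesis unfolding paths_def by (simp add: collist_def)
qed

lemma nth_addc:
  assumes "xs \<in> paths S N" "j < N"
  shows "xs ! j \<in> addc (S \<union> set (take j xs))"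
proof -
  have l: "length xs = N" "distinct xs" "set xs \<inter> S = {}" "\<And>j. dc (S \<union> set (take j xs))"
    using assms(1) unfolding paths_def by auto
  have "xs ! j \<notin> S" using l assms(2) by (metis disjoint_iff nth_mem)
  moreover have "xs ! j \<notin> set (take j xs)"
  proof
    assume "xs ! j \<in> set (take j xs)"
    then obtain i where i: "i < length (take j xs)" "take j xs ! i = xs ! j" by (auto simp: in_set_conv_nth)
    then have "i < j" "xs ! i = xs ! j" by auto
    then show False using l assms(2) nth_eq_iff_index_eq by fastforce
  qed
  moreover have "dc (insert (xs ! j) (S \<union> set (take j xs)))"
    using l(4)[of "Suc j"] assms(2) l(1) by (simp add: take_Suc_conv_app_nth)
  ultimately show ?thesis unfolding addc_def by simp
qed



lemma cells_Sigma: "cells lam = (SIGMA i:{..<length lam}. {..<lam ! i})"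
  unfolding cells_def by auto

lemma finite_cells: "finite (cells lam)"
  unfolding cells_Sigma by auto

lemma card_cells: "card (cells lam) = sum_list lam"
  unfolding cells_Sigma by (simp add: sum_list_sum_nth atLeast0LessThan)

lemma dc_cells:
  assumes "sorted_wrt (\<ge>) lam"
  shows "dc (cells lam)"
  unfolding dc_def
proof (intro allI impI)
  fix i j i' j'
  assume h: "(i,j) \<in> cells lam" "i' \<le> i" "j' \<le> j"
  then have ij: "i < length lam" "j < lam ! i" unfolding cells_def by auto
  have "lam ! i \<le> lam ! i'"
  proof (cases "i' = i")
    case False
    then have "i' < i" using h by simp
    then show ?thesis using sorted_wrt_nth_less[OF assms \<open>i' < i\<close> ij(1)] by simp
  qed simp
  then show "(i',j') \<in> cells lam" using ij h unfolding cells_def by auto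
qed

lemma valid_cells: "sorted_wrt (\<ge>) lam \<Longrightarrow> valid (cells lam)"
  using dc_cells finite_cells valid_def by blast

definition partition_of :: "(nat \<times> nat) set \<Rightarrow> nat list" where
  "partition_of S = map (rw S) [0..<card {i. (i,0) \<in> S}]"

lemma col0_eq:
  assumes "valid S"
  shows "{i. (i,0) \<in> S} = {..<card {i. (i,0) \<in> S}}"
proof -
  have "{i. (i,0) \<in> S} \<subseteq> fst ` S" by force
  then have "finite {i. (i,0) \<in> S}" using assms unfolding valid_def by (meson finite_surj)
  moreover have "\<forall>x\<in>{i. (i,0) \<in> S}. \<forall>y\<le>x. y \<in> {i. (i,0) \<in> S}"
    using assms unfolding valid_def dc_def by auto
  ultimately show ?thesis by (rule dcnat)
qed

lemma partition_of_props:
  assumes "valid S"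
  shows "cells (partition_of S) = S" "is_partition (partition_of S) (card S)"
proof -
  let ?h = "card {i. (i,0) \<in> S}"
  let ?P = "partition_of S"
  have h: "\<And>i. (i,0) \<in> S \<longleftrightarrow> i < ?h" using col0_eq[OF assms] by blast
  have r0: "\<And>i. 0 < rw S i \<longleftrightarrow> (i,0) \<in> S" using rowchar[OF assms] by simp
  have len: "length ?P = ?h" unfolding partition_of_def by simp
  have nth: "\<And>i. i < ?h \<Longrightarrow> ?P ! i = rw S i" unfolding partition_of_def by simp
  have mem: "(i,j) \<in> cells ?P \<longleftrightarrow> (i,j) \<in> S" for i j
  proof
    assume "(i,j) \<in> cells ?P"
    then have "i < ?h" "j < ?P ! i" unfolding cells_def len by auto
    then show "(i,j) \<in> S" using nth rowchar[OF assms] by simp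
  next
    assume a: "(i,j) \<in> S"
    then have "(i,0) \<in> S" using assms unfolding valid_def dc_def by blast
    then have "i < ?h" using h by blast
    moreover have "j < rw S i" using a rowchar[OF assms] by simp
    ultimately show "(i,j) \<in> cells ?P" unfolding cells_def using len nth by simp
  qed
  show c: "cells ?P = S"
  proof (intro set_eqI)
    fix c :: "nat \<times> nat"
    show "c \<in> cells ?P \<longleftrightarrow> c \<in> S" using mem by (cases c) blast
  qed
  have s: "sorted_wrt (\<ge>) ?P"
    unfolding sorted_wrt_iff_nth_less
  proof (intro allI impI)
    fix i j assume "i < j" "j < length ?P"
    then show "?P ! j \<le> ?P ! i" using len nth rw_anti[OF assms, of i j] by simp
  qed
  have z: "0 \<notin> set ?P"
  proof
    assume "0 \<in> set ?P"
    then obtain i where i: "i < length ?P" "?P ! i = 0" by (metis in_set_conv_nth)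
    then have "i < ?h" using len by simp
    then have "0 < rw S i" using h r0 by blast
    then show False using i nth \<open>i < ?h\<close> by simp
  qed
  have "sum_list ?P = card S" using card_cells[of ?P] c by simp
  then show "is_partition ?P (card S)" unfolding is_partition_def using s z by blast
qed

lemma partition_of_cells:
  assumes "is_partition lam n"
  shows "partition_of (cells lam) = lam"
proof -
  have s: "sorted_wrt (\<ge>) lam" and z: "0 \<notin> set lam" using assms unfolding is_partition_def by auto
  have pos: "\<And>i. i < length lam \<Longrightarrow> 0 < lam ! i" using z by (metis gr0I nth_mem)
  have "{i. (i,0) \<in> cells lam} = {..<length lam}" unfolding cells_def using pos by auto
  moreover have "\<And>i. i < length lam \<Longrightarrow> rw (cells lam) i = lam ! i"
  proof -
    fix i assume "i < length lam"
    then have "{j. (i,j) \<in> cells lam} = {..<lam ! i}" unfolding cells_def by auto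
    then show "rw (cells lam) i = lam ! i" unfolding rw_def by simp
  qed
  ultimately show ?thesis unfolding partition_of_def by (intro nth_equalityI) auto
qed

lemma syt_D:
  assumes "is_SYT n lam T"
  shows "is_partition lam n" "T \<in> cells lam \<rightarrow>\<^sub>E {1..n}" "bij_betw T (cells lam) {1..n}"
    "\<And>i j. (i, j) \<in> cells lam \<Longrightarrow> (i, Suc j) \<in> cells lam \<Longrightarrow> T (i, j) < T (i, Suc j)"
    "\<And>i j. (i, j) \<in> cells lam \<Longrightarrow> (Suc i, j) \<in> cells lam \<Longrightarrow> T (i, j) < T (Suc i, j)"
    "dc (cells lam)"
proof -
  show "is_partition lam n" "T \<in> cells lam \<rightarrow>\<^sub>E {1..n}" "bij_betw T (cells lam) {1..n}"
    "\<And>i j. (i, j) \<in> cells lam \<Longrightarrow> (i, Suc j) \<in> cells lam \<Longrightarrow> T (i, j) < T (i, Suc j)"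
    "\<And>i j. (i, j) \<in> cells lam \<Longrightarrow> (Suc i, j) \<in> cells lam \<Longrightarrow> T (i, j) < T (Suc i, j)"
    using assms unfolding is_SYT_def by blast+
  then show "dc (cells lam)" using dc_cells unfolding is_partition_def by blast
qed

lemma syt_row:
  assumes "is_SYT n lam T" "(i, j + d) \<in> cells lam"
  shows "T (i,j) \<le> T (i, j + d)"
  using assms(2)
proof (induction d)
  case 0 then show ?case by simp
next
  case (Suc d)
  have dcc: "dc (cells lam)" using syt_D(6)[OF assms(1)] .
  have "(i, j + d) \<in> cells lam" using dcc[unfolded dc_def, rule_format, OF Suc.prems, of i "j+d"] by simp
  moreover have "T (i, j + d) < T (i, Suc (j + d))"
    using syt_D(4)[OF assms(1) calculation] Suc.prems by simp
  ultimately show ?case using Suc.IH by simp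
qed

lemma syt_col:
  assumes "is_SYT n lam T" "(i + d, j) \<in> cells lam"
  shows "T (i,j) \<le> T (i + d, j)"
  using assms(2)
proof (induction d)
  case 0 then show ?case by simp
next
  case (Suc d)
  have dcc: "dc (cells lam)" using syt_D(6)[OF assms(1)] .
  have "(i + d, j) \<in> cells lam" using dcc[unfolded dc_def, rule_format, OF Suc.prems, of "i+d" j] by simp
  moreover have "T (i + d, j) < T (Suc (i + d), j)"
    using syt_D(5)[OF assms(1) calculation] Suc.prems by simp
  ultimately show ?case using Suc.IH by simp
qed

lemma syt_mono:
  assumes "is_SYT n lam T" "(a,b) \<in> cells lam" "a' \<le> a" "b' \<le> b"
  shows "T (a',b') \<le> T (a,b)"
proof -
  have dcc: "dc (cells lam)" using syt_D(6)[OF assms(1)] .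
  have "(a',b) \<in> cells lam" using dcc[unfolded dc_def, rule_format, OF assms(2), of a' b] assms by simp
  then have "T (a',b') \<le> T (a',b)" using syt_row[OF assms(1), of a' b' "b - b'"] assms by simp
  also have "\<dots> \<le> T (a,b)" using syt_col[OF assms(1), of a' "a - a'" b] assms by simp
  finally show ?thesis .
qed

lemma set_take_nth: "set (take j xs) = (\<lambda>i. xs ! i) ` {..<min j (length xs)}"
proof (intro set_eqI iffI)
  fix x assume "x \<in> set (take j xs)"
  then obtain i where "i < length (take j xs)" "take j xs ! i = x" by (auto simp: in_set_conv_nth)
  then show "x \<in> (\<lambda>i. xs ! i) ` {..<min j (length xs)}" by auto
next
  fix x assume "x \<in> (\<lambda>i. xs ! i) ` {..<min j (length xs)}"
  then obtain i where "i < min j (length xs)" "x = xs ! i" by auto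
  then show "x \<in> set (take j xs)" by (auto simp: in_set_conv_nth intro!: exI[of _ i])
qed



definition Phi :: "nat \<Rightarrow> nat list \<times> (nat \<times> nat \<Rightarrow> nat) \<Rightarrow> (nat \<times> nat) list" where
  "Phi n p = map (inv_into (cells (fst p)) (snd p)) [1..<Suc n]"

lemma Phi_basic:
  assumes "is_SYT n lam T"
  shows "length (Phi n (lam,T)) = n"
    "\<And>i. i < n \<Longrightarrow> Phi n (lam,T) ! i = inv_into (cells lam) T (Suc i)"
    "T ` cells lam = {1..n}" "inj_on T (cells lam)"
proof -
  show "length (Phi n (lam,T)) = n" unfolding Phi_def by simp
  show "\<And>i. i < n \<Longrightarrow> Phi n (lam,T) ! i = inv_into (cells lam) T (Suc i)"
    unfolding Phi_def by (simp add: nth_map del: upt_Suc)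
  show "T ` cells lam = {1..n}" "inj_on T (cells lam)"
    using syt_D(3)[OF assms] unfolding bij_betw_def by auto
qed

lemma Phi_take:
  assumes "is_SYT n lam T"
  shows "set (take j (Phi n (lam,T))) = {c \<in> cells lam. T c \<le> j}"
proof -
  note b = Phi_basic[OF assms]
  let ?g = "inv_into (cells lam) T"
  have "set (take j (Phi n (lam,T))) = (\<lambda>i. Phi n (lam,T) ! i) ` {..<min j n}"
    by (subst set_take_nth) (simp add: b(1))
  also have "\<dots> = (\<lambda>i. ?g (Suc i)) ` {..<min j n}"
    using b(2) by (intro image_cong) auto
  also have "\<dots> = {c \<in> cells lam. T c \<le> j}"
  proof (intro set_eqI iffI)
    fix c assume "c \<in> (\<lambda>i. ?g (Suc i)) ` {..<min j n}"
    then obtain i where i: "i < min j n" "c = ?g (Suc i)" by blast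
    then have si: "Suc i \<in> T ` cells lam" using b(3) by simp
    then have "c \<in> cells lam" using i inv_into_into by metis
    moreover have "T c = Suc i" using i si f_inv_into_f by metis
    ultimately show "c \<in> {c \<in> cells lam. T c \<le> j}" using i by simp
  next
    fix c assume c: "c \<in> {c \<in> cells lam. T c \<le> j}"
    then have "T c \<in> {1..n}" using b(3) by blast
    then obtain i where i: "T c = Suc i" "i < n" by (cases "T c") auto
    have "?g (T c) = c" using c b(4) by simp
    then show "c \<in> (\<lambda>i. ?g (Suc i)) ` {..<min j n}" using i c by (intro image_eqI[of _ _ i]) auto
  qed
  finally show ?thesis .
qed

lemma Phi_set:
  assumes "is_SYT n lam T"
  shows "set (Phi n (lam,T)) = cells lam"
proof -
  have "set (take n (Phi n (lam,T))) = {c \<in> cells lam. T c \<le> n}" by (rule Phi_take[OF assms])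
  moreover have "take n (Phi n (lam,T)) = Phi n (lam,T)" using Phi_basic(1)[OF assms] by simp
  moreover have "{c \<in> cells lam. T c \<le> n} = cells lam" using Phi_basic(3)[OF assms] by auto
  ultimately show ?thesis by simp
qed

lemma Phi_paths:
  assumes "is_SYT n lam T"
  shows "Phi n (lam,T) \<in> paths {} n"
proof -
  note b = Phi_basic[OF assms]
  have "distinct (Phi n (lam,T))"
  proof -
    have "inj_on (inv_into (cells lam) T) (set [1..<Suc n])"
      using b(3) by (intro inj_on_inv_into) auto
    then show ?thesis unfolding Phi_def by (simp add: distinct_map)
  qed
  moreover have "dc (set (take j (Phi n (lam,T))))" for j
    unfolding Phi_take[OF assms] dc_def
  proof (intro allI impI)
    fix a b a' b' assume h: "(a,b) \<in> {c \<in> cells lam. T c \<le> j}" "a' \<le> a" "b' \<le> b"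
    have "(a',b') \<in> cells lam"
      using syt_D(6)[OF assms, unfolded dc_def, rule_format, of a b a' b'] h by simp
    moreover have "T (a',b') \<le> T (a,b)" using syt_mono[OF assms, of a b a' b'] h by simp
    ultimately show "(a',b') \<in> {c \<in> cells lam. T c \<le> j}" using h by simp
  qed
  ultimately show ?thesis unfolding paths_def using b(1) by simp
qed

lemma Phi_inj:
  assumes "is_SYT n lam T" "is_SYT n lam' T'" "Phi n (lam,T) = Phi n (lam',T')"
  shows "lam = lam' \<and> T = T'"
proof -
  have ce: "cells lam = cells lam'" using Phi_set assms by metis
  have l: "lam = lam'"
    using partition_of_cells[OF syt_D(1)[OF assms(1)]] partition_of_cells[OF syt_D(1)[OF assms(2)]] ce
    by metis
  have "T c = T' c" for c
  proof (cases "c \<in> cells lam")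
    case True
    note b = Phi_basic[OF assms(1)] and b' = Phi_basic[OF assms(2)]
    have "T c \<in> {1..n}" using True b(3) by blast
    then obtain i where i: "T c = Suc i" "i < n" by (cases "T c") auto
    have "inv_into (cells lam) T (T c) = c" using b(4) True by simp
    then have "Phi n (lam,T) ! i = c" using b(2)[OF i(2)] i(1) by simp
    then have g': "inv_into (cells lam') T' (Suc i) = c" using assms(3) b'(2)[OF i(2)] by simp
    have "Suc i \<in> T' ` cells lam'" using b'(3) i by simp
    then have "T' c = Suc i" using g' f_inv_into_f by metis
    then show ?thesis using i by simp
  next
    case False
    then show ?thesis using PiE_arb[OF syt_D(2)[OF assms(1)]] PiE_arb[OF syt_D(2)[OF assms(2)]] ce by simp
  qed
  then show ?thesis using l by auto
qed

definition idx :: "'a list \<Rightarrow> 'a \<Rightarrow> nat" where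
  "idx xs c = (THE i. i < length xs \<and> xs ! i = c)"

lemma idx_nth: "distinct xs \<Longrightarrow> i < length xs \<Longrightarrow> idx xs (xs ! i) = i"
  unfolding idx_def by (rule the_equality) (auto simp: nth_eq_iff_index_eq)

lemma idx_mem: "distinct xs \<Longrightarrow> c \<in> set xs \<Longrightarrow> idx xs c < length xs \<and> xs ! idx xs c = c"
  by (metis idx_nth in_set_conv_nth)

lemma paths_order:
  assumes "xs \<in> paths {} n" "(a,b) \<in> set xs" "a' \<le> a" "b' \<le> b" "(a',b') \<noteq> (a,b)"
  shows "(a',b') \<in> set xs \<and> idx xs (a',b') < idx xs (a,b)"
proof -
  have l: "length xs = n" "distinct xs" "\<And>j. dc ({} \<union> set (take j xs))"
    using assms(1) unfolding paths_def by auto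
  let ?q = "idx xs (a,b)"
  have q: "?q < n" "xs ! ?q = (a,b)" using idx_mem[OF l(2) assms(2)] l(1) by auto
  have "(a,b) \<in> set (take (Suc ?q) xs)" using q set_take_nth[of "Suc ?q" xs] l(1) by force
  then have "(a',b') \<in> set (take (Suc ?q) xs)"
    using l(3)[of "Suc ?q", unfolded dc_def, rule_format, of a b a' b'] assms(3,4) by simp
  then obtain p where p: "p < min (Suc ?q) n" "xs ! p = (a',b')" using set_take_nth[of "Suc ?q" xs] l(1) by auto
  have "p \<noteq> ?q" using p q assms(5) by auto
  then have "p < ?q" using p by simp
  moreover have "idx xs (a',b') = p" using p idx_nth[OF l(2)] l(1) by force
  moreover have "(a',b') \<in> set xs" using p l(1) nth_mem by force
  ultimately show ?thesis by simp
qed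

lemma Phi_surj:
  assumes "xs \<in> paths {} n" "k - 1 < n" "xs ! (k - 1) = (0,1)" "1 \<le> k"
  shows "\<exists>lam T. is_SYT n lam T \<and> (0,1) \<in> cells lam \<and> T (0,1) = k \<and> Phi n (lam,T) = xs"
proof -
  have l: "length xs = n" "distinct xs" "\<And>j. dc ({} \<union> set (take j xs))"
    using assms(1) unfolding paths_def by auto
  have v: "valid (set xs)" using l(3)[of n] l(1) unfolding valid_def by simp
  define lam where "lam = partition_of (set xs)"
  define T where "T c = (if c \<in> set xs then Suc (idx xs c) else undefined)" for c
  have ce: "cells lam = set xs" unfolding lam_def using partition_of_props(1)[OF v] .
  have part: "is_partition lam n"
    unfolding lam_def using partition_of_props(2)[OF v] l distinct_card by metis
  have Tnth: "\<And>i. i < n \<Longrightarrow> T (xs ! i) = Suc i" unfolding T_def using idx_nth l by auto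
  have PiE: "T \<in> cells lam \<rightarrow>\<^sub>E {1..n}"
  proof (rule PiE_I)
    fix c assume "c \<in> cells lam"
    then have "c \<in> set xs" using ce by simp
    then have "idx xs c < n" using idx_mem[OF l(2)] l(1) by blast
    then show "T c \<in> {1..n}" using \<open>c \<in> set xs\<close> unfolding T_def by simp
  next
    fix c assume "c \<notin> cells lam"
    then show "T c = undefined" using ce unfolding T_def by simp
  qed
  have inj: "inj_on T (set xs)"
  proof (rule inj_onI)
    fix c c' assume "c \<in> set xs" "c' \<in> set xs" "T c = T c'"
    then show "c = c'" using idx_mem[OF l(2)] unfolding T_def by (metis Suc_inject)
  qed
  have img: "T ` set xs = {1..n}"
  proof (intro set_eqI iffI)
    fix m assume "m \<in> T ` set xs"
    then show "m \<in> {1..n}" using PiE ce by (auto dest: PiE_mem)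
  next
    fix m assume m: "m \<in> {1..n}"
    then have "m - 1 < n" "T (xs ! (m - 1)) = m" using Tnth by auto
    then show "m \<in> T ` set xs" using l(1) by (metis image_eqI nth_mem)
  qed
  have row: "T (i, j) < T (i, Suc j)" if "(i, j) \<in> cells lam" "(i, Suc j) \<in> cells lam" for i j
  proof -
    have "idx xs (i,j) < idx xs (i, Suc j)"
      using paths_order[OF assms(1), of i "Suc j" i j] that ce by simp
    then show ?thesis using that ce unfolding T_def by simp
  qed
  have col: "T (i, j) < T (Suc i, j)" if "(i, j) \<in> cells lam" "(Suc i, j) \<in> cells lam" for i j
  proof -
    have "idx xs (i,j) < idx xs (Suc i, j)"
      using paths_order[OF assms(1), of "Suc i" j i j] that ce by simp
    then show ?thesis using that ce unfolding T_def by simp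
  qed
  have syt: "is_SYT n lam T"
    unfolding is_SYT_def bij_betw_def using part PiE inj img row col ce by simp
  have c01: "(0,1) \<in> cells lam" using ce assms(2,3) l(1) by (metis nth_mem)
  have T01: "T (0,1) = k" using Tnth[OF assms(2)] assms(3,4) by simp
  have "Phi n (lam,T) = xs"
  proof (rule nth_equalityI)
    show "length (Phi n (lam,T)) = length xs" using Phi_basic(1)[OF syt] l(1) by simp
  next
    fix i assume "i < length (Phi n (lam,T))"
    then have i: "i < n" using Phi_basic(1)[OF syt] by simp
    have "inv_into (cells lam) T (Suc i) = xs ! i"
      using inj ce Tnth[OF i] i l(1) by (intro inv_into_f_eq) auto
    then show "Phi n (lam,T) ! i = xs ! i" using Phi_basic(2)[OF syt i] by simp
  qed
  then show ?thesis using syt c01 T01 by blast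
qed

lemma f_syt_paths:
  assumes "1 \<le> k" "k \<le> n"
  shows "f_syt n k = card {xs \<in> paths {} n. xs ! (k - 1) = (0,1)}"
proof -
  let ?A = "{(lam, T). is_SYT n lam T \<and> (0, 1) \<in> cells lam \<and> T (0, 1) = k}"
  let ?B = "{xs \<in> paths {} n. xs ! (k - 1) = (0,1)}"
  have "bij_betw (Phi n) ?A ?B"
    unfolding bij_betw_def
  proof
    show "inj_on (Phi n) ?A"
    proof (rule inj_onI)
      fix p p' assume "p \<in> ?A" "p' \<in> ?A" "Phi n p = Phi n p'"
      then show "p = p'" using Phi_inj by (cases p, cases p') auto
    qed
    show "Phi n ` ?A = ?B"
    proof (intro set_eqI iffI)
      fix xs assume "xs \<in> Phi n ` ?A"
      then obtain lam T where h: "is_SYT n lam T" "(0,1) \<in> cells lam" "T (0,1) = k" "xs = Phi n (lam,T)"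
        by auto
      have "xs ! (k - 1) = inv_into (cells lam) T k"
        using Phi_basic(2)[OF h(1), of "k - 1"] h(4) assms by simp
      also have "\<dots> = (0,1)" using h(2,3) Phi_basic(4)[OF h(1)] by (metis inv_into_f_f)
      finally show "xs \<in> ?B" using Phi_paths[OF h(1)] h(4) by simp
    next
      fix xs assume "xs \<in> ?B"
      have "k - 1 < n" using assms by simp
      then obtain lam T where "is_SYT n lam T" "(0,1) \<in> cells lam" "T (0,1) = k" "Phi n (lam,T) = xs"
        using Phi_surj[of xs n k] assms \<open>xs \<in> ?B\<close> by auto
      then show "xs \<in> Phi n ` ?A" by force
    qed
  qed
  then show ?thesis unfolding f_syt_def by (rule bij_betw_same_card)
qed



definition invs :: "'a set \<Rightarrow> ('a \<Rightarrow> 'a) set" where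
  "invs A = {p \<in> A \<rightarrow>\<^sub>E A. \<forall>x\<in>A. p (p x) = x}"

lemma finite_invs: "finite A \<Longrightarrow> finite (invs A)"
proof -
  assume "finite A"
  then have "finite (A \<rightarrow>\<^sub>E A)" by (simp add: finite_PiE)
  then show ?thesis unfolding invs_def by simp
qed

lemma card_X0:
  assumes "a \<in> A"
  shows "card {p \<in> invs A. p a = a} = card (invs (A - {a}))"
proof -
  let ?A' = "A - {a}"
  have "bij_betw (\<lambda>p. restrict p ?A') {p \<in> invs A. p a = a} (invs ?A')"
  proof (rule bij_betw_byWitness[where f' = "\<lambda>q. q(a := a)"])
    show "\<forall>p\<in>{p \<in> invs A. p a = a}. (restrict p ?A')(a := a) = p"
    proof
      fix p assume p: "p \<in> {p \<in> invs A. p a = a}"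
      show "(restrict p ?A')(a := a) = p"
      proof
        fix x show "((restrict p ?A')(a := a)) x = p x"
          using p PiE_arb[of p A "\<lambda>_. A" x] unfolding invs_def by (cases "x = a") auto
      qed
    qed
    show "\<forall>q\<in>invs ?A'. restrict (q(a := a)) ?A' = q"
    proof
      fix q assume q: "q \<in> invs ?A'"
      show "restrict (q(a := a)) ?A' = q"
      proof
        fix x show "restrict (q(a := a)) ?A' x = q x"
          using q PiE_arb[of q ?A' "\<lambda>_. ?A'" x] unfolding invs_def by auto
      qed
    qed
    show "(\<lambda>p. restrict p ?A') ` {p \<in> invs A. p a = a} \<subseteq> invs ?A'"
    proof
      fix q assume "q \<in> (\<lambda>p. restrict p ?A') ` {p \<in> invs A. p a = a}"
      then obtain p where p: "p \<in> invs A" "p a = a" "q = restrict p ?A'" by blast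
      have pA: "\<And>x. x \<in> A \<Longrightarrow> p x \<in> A" "\<And>x. x \<in> A \<Longrightarrow> p (p x) = x"
        using p unfolding invs_def by auto
      have ne: "\<And>x. x \<in> ?A' \<Longrightarrow> p x \<noteq> a" using pA p(2) by force
      show "q \<in> invs ?A'" unfolding invs_def using p(3) pA ne by auto
    qed
    show "(\<lambda>q. q(a := a)) ` invs ?A' \<subseteq> {p \<in> invs A. p a = a}"
    proof
      fix p assume "p \<in> (\<lambda>q. q(a := a)) ` invs ?A'"
      then obtain q where q: "q \<in> invs ?A'" "p = q(a := a)" by blast
      have qA: "\<And>x. x \<in> ?A' \<Longrightarrow> q x \<in> ?A'" "\<And>x. x \<in> ?A' \<Longrightarrow> q (q x) = x"
        "\<And>x. x \<notin> ?A' \<Longrightarrow> q x = undefined"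
        using q(1) unfolding invs_def by (auto dest: PiE_arb)
      have "p \<in> A \<rightarrow>\<^sub>E A"
      proof (rule PiE_I)
        fix x assume "x \<in> A" then show "p x \<in> A" using q(2) qA by (cases "x = a") auto
      next
        fix x assume "x \<notin> A" then show "p x = undefined" using q(2) qA assms by auto
      qed
      moreover have "\<forall>x\<in>A. p (p x) = x"
      proof
        fix x assume "x \<in> A"
        then show "p (p x) = x" using q(2) qA by (cases "x = a") auto
      qed
      ultimately show "p \<in> {p \<in> invs A. p a = a}" unfolding invs_def using q(2) by simp
    qed
  qed
  then show ?thesis by (rule bij_betw_same_card)
qed

lemma card_Xb:
  assumes "a \<in> A" "b \<in> A" "b \<noteq> a"
  shows "card {p \<in> invs A. p a = b} = card (invs (A - {a} - {b}))"
proof -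
  let ?A' = "A - {a} - {b}"
  have "bij_betw (\<lambda>p. restrict p ?A') {p \<in> invs A. p a = b} (invs ?A')"
  proof (rule bij_betw_byWitness[where f' = "\<lambda>q. q(a := b, b := a)"])
    show "\<forall>p\<in>{p \<in> invs A. p a = b}. (restrict p ?A')(a := b, b := a) = p"
    proof
      fix p assume p: "p \<in> {p \<in> invs A. p a = b}"
      have pi: "p \<in> A \<rightarrow>\<^sub>E A" "\<And>x. x \<in> A \<Longrightarrow> p (p x) = x" "p a = b"
        using p unfolding invs_def by auto
      have pb: "p b = a" using pi(2)[OF assms(1)] pi(3) by simp
      show "(restrict p ?A')(a := b, b := a) = p"
      proof
        fix x
        show "((restrict p ?A')(a := b, b := a)) x = p x"
        proof (cases "x = b")
          case True then show ?thesis using pb by simp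
        next
          case nb: False
          show ?thesis
          proof (cases "x = a")
            case True then show ?thesis using nb pi(3) by simp
          next
            case na: False
            show ?thesis
            proof (cases "x \<in> A")
              case True then show ?thesis using na nb by simp
            next
              case False then show ?thesis using na nb PiE_arb[OF pi(1) False] by simp
            qed
          qed
        qed
      qed
    qed
    show "\<forall>q\<in>invs ?A'. restrict (q(a := b, b := a)) ?A' = q"
    proof
      fix q assume q: "q \<in> invs ?A'"
      then have qe: "q \<in> ?A' \<rightarrow>\<^sub>E ?A'" unfolding invs_def by simp
      show "restrict (q(a := b, b := a)) ?A' = q"
      proof
        fix x
        show "restrict (q(a := b, b := a)) ?A' x = q x"
        proof (cases "x \<in> ?A'")
          case True then show ?thesis by simp
        next
          case False then show ?thesis using PiE_arb[OF qe False] by simp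
        qed
      qed
    qed
    show "(\<lambda>p. restrict p ?A') ` {p \<in> invs A. p a = b} \<subseteq> invs ?A'"
    proof
      fix q assume "q \<in> (\<lambda>p. restrict p ?A') ` {p \<in> invs A. p a = b}"
      then obtain p where p: "p \<in> invs A" "p a = b" "q = restrict p ?A'" by blast
      have pA: "\<And>x. x \<in> A \<Longrightarrow> p x \<in> A" "\<And>x. x \<in> A \<Longrightarrow> p (p x) = x"
        using p unfolding invs_def by auto
      have pb: "p b = a" using pA(2)[OF assms(1)] p(2) by simp
      have ne: "p x \<in> ?A'" if x: "x \<in> ?A'" for x
      proof -
        have "p x \<noteq> a"
        proof
          assume "p x = a" then have "p (p x) = b" using p(2) by simp
          then show False using pA(2) x by auto
        qed
        moreover have "p x \<noteq> b"
        proof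
          assume "p x = b" then have "p (p x) = a" using pb by simp
          then show False using pA(2) x by auto
        qed
        ultimately show ?thesis using pA(1) x by auto
      qed
      have "q \<in> ?A' \<rightarrow>\<^sub>E ?A'" using p(3) ne by auto
      moreover have "\<forall>x\<in>?A'. q (q x) = x" using p(3) ne pA(2) by auto
      ultimately show "q \<in> invs ?A'" unfolding invs_def by simp
    qed
    show "(\<lambda>q. q(a := b, b := a)) ` invs ?A' \<subseteq> {p \<in> invs A. p a = b}"
    proof
      fix p assume "p \<in> (\<lambda>q. q(a := b, b := a)) ` invs ?A'"
      then obtain q where q: "q \<in> invs ?A'" "p = q(a := b, b := a)" by blast
      have qe: "q \<in> ?A' \<rightarrow>\<^sub>E ?A'" and qA: "\<And>x. x \<in> ?A' \<Longrightarrow> q (q x) = x"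
        using q(1) unfolding invs_def by auto
      have qm: "\<And>x. x \<in> ?A' \<Longrightarrow> q x \<in> ?A'" using qe by (auto dest: PiE_mem)
      have pa: "p a = b" "p b = a" using q(2) assms by auto
      have po: "\<And>x. x \<noteq> a \<Longrightarrow> x \<noteq> b \<Longrightarrow> p x = q x" using q(2) by simp
      have "p \<in> A \<rightarrow>\<^sub>E A"
      proof (rule PiE_I)
        fix x assume x: "x \<in> A"
        show "p x \<in> A"
        proof (cases "x = a \<or> x = b")
          case True then show ?thesis using pa assms by auto
        next
          case False then show ?thesis using po qm x by auto
        qed
      next
        fix x assume x: "x \<notin> A"
        then have "x \<noteq> a" "x \<noteq> b" "x \<notin> ?A'" using assms by auto
        then show "p x = undefined" using po PiE_arb[OF qe] by simp
      qed
      moreover have "\<forall>x\<in>A. p (p x) = x"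
      proof
        fix x assume x: "x \<in> A"
        show "p (p x) = x"
        proof (cases "x = a \<or> x = b")
          case True then show ?thesis using pa by auto
        next
          case False
          then have xA: "x \<in> ?A'" using x by simp
          then have "q x \<in> ?A'" by (rule qm)
          then have "p (q x) = q (q x)" using po by simp
          then show ?thesis using po False qA[OF xA] by simp
        qed
      qed
      ultimately show "p \<in> {p \<in> invs A. p a = b}" unfolding invs_def using pa by simp
    qed
  qed
  then show ?thesis by (rule bij_betw_same_card)
qed

lemma card_invs_aux: "\<forall>A. finite A \<and> card A = m \<longrightarrow> card (invs A) = Tn m"
proof (induction m rule: less_induct)
  case (less m)
  show ?case
  proof (intro allI impI)
    fix A :: "'a set" assume A: "finite A \<and> card A = m"
    show "card (invs A) = Tn m"
    proof (cases m)
      case 0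
      then have "A = {}" using A card_0_eq by blast
      then have "invs A = {\<lambda>_. undefined}" unfolding invs_def by simp
      then show ?thesis using 0 by simp
    next
      case (Suc m')
      then obtain a where a: "a \<in> A" using A by fastforce
      let ?A' = "A - {a}"
      have cA': "card ?A' = m'" "finite ?A'" using A a Suc by auto
      have dec: "invs A = {p \<in> invs A. p a = a} \<union> (\<Union>b\<in>?A'. {p \<in> invs A. p a = b})"
      proof (intro set_eqI iffI)
        fix p assume p: "p \<in> invs A"
        then have "p a \<in> A" using a unfolding invs_def by auto
        then show "p \<in> {p \<in> invs A. p a = a} \<union> (\<Union>b\<in>?A'. {p \<in> invs A. p a = b})"
          using p by blast
      qed blast
      have finI: "finite (invs A)" using finite_invs A by blast
      have "card (invs A) = card {p \<in> invs A. p a = a} + card (\<Union>b\<in>?A'. {p \<in> invs A. p a = b})"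
      proof (subst dec, rule card_Un_disjoint)
        show "finite (\<Union>b\<in>?A'. {p \<in> invs A. p a = b})"
          by (rule finite_subset[OF _ finI]) blast
      qed (use finI in auto)
      also have "card (\<Union>b\<in>?A'. {p \<in> invs A. p a = b}) = (\<Sum>b\<in>?A'. card {p \<in> invs A. p a = b})"
        by (rule card_UN_disjoint) (use finI cA' in auto)
      also have "\<dots> = (\<Sum>b\<in>?A'. Tn (m' - 1))"
      proof (rule sum.cong[OF refl])
        fix b assume b: "b \<in> ?A'"
        have "card {p \<in> invs A. p a = b} = card (invs (A - {a} - {b}))"
          using card_Xb[OF a] b by blast
        also have "\<dots> = Tn (m' - 1)"
          using less.IH[of "m' - 1"] Suc cA' b by auto
        finally show "card {p \<in> invs A. p a = b} = Tn (m' - 1)" .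
      qed
      also have "card {p \<in> invs A. p a = a} = Tn m'"
        using card_X0[OF a] less.IH[of m'] Suc cA' by auto
      finally show ?thesis using Suc cA' Tn_Suc[of m'] by simp
    qed
  qed
qed

lemma t_inv_Tn: "t_inv (int m) = int (Tn m)"
proof -
  have "involutions m = invs {1..m}" unfolding involutions_def invs_def by simp
  moreover have "card (invs {1..m}) = Tn m" using card_invs_aux[of m, rule_format, of "{1..m}"] by simp
  ultimately show ?thesis unfolding t_inv_def by simp
qed



definition Gs :: "nat \<Rightarrow> nat \<Rightarrow> (nat \<times> nat) list set" where
  "Gs n m = {xs \<in> paths {} n. take m xs = collist m}"

lemma length_collist: "length (collist m) = m"
  unfolding collist_def by simp

lemma card_Gs:
  assumes "m \<le> n"
  shows "card (Gs n m) = card (paths (colset m) (n - m))"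
proof -
  have dc0: "dc {}" unfolding dc_def by simp
  have eq: "{} \<union> set (collist m) = colset m" using set_collist by simp
  have "bij_betw (\<lambda>ys. collist m @ ys) (paths (colset m) (n - m)) (Gs n m)"
    unfolding bij_betw_def
  proof
    show "inj_on (\<lambda>ys. collist m @ ys) (paths (colset m) (n - m))" by (simp add: inj_on_def)
    show "(\<lambda>ys. collist m @ ys) ` paths (colset m) (n - m) = Gs n m"
    proof (intro set_eqI iffI)
      fix xs assume "xs \<in> (\<lambda>ys. collist m @ ys) ` paths (colset m) (n - m)"
      then obtain ys where ys: "ys \<in> paths (colset m) (n - m)" "xs = collist m @ ys" by blast
      have "collist m @ ys \<in> paths {} (length (collist m) + (n - m))"
        using paths_append[OF dc0, of "collist m" ys "n - m"] ys(1) eq collist_paths[of m]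
        by (simp add: length_collist)
      then have "xs \<in> paths {} n" using ys(2) assms by (simp add: length_collist)
      moreover have "take m xs = collist m" using ys(2) by (simp add: length_collist)
      ultimately show "xs \<in> Gs n m" unfolding Gs_def by simp
    next
      fix xs assume xs: "xs \<in> Gs n m"
      then have p: "xs \<in> paths {} n" and t: "take m xs = collist m" unfolding Gs_def by auto
      have x: "xs = collist m @ drop m xs" using t by (metis append_take_drop_id)
      have "collist m @ drop m xs \<in> paths {} (length (collist m) + (n - m))"
        using p x assms by (simp add: length_collist)
      then have "drop m xs \<in> paths (colset m) (n - m)"
        using paths_append[OF dc0, of "collist m" "drop m xs" "n - m"] eq by simp
      then show "xs \<in> (\<lambda>ys. collist m @ ys) ` paths (colset m) (n - m)" using x by blast
    qed
  qed
  then show ?thesis by (metis bij_betw_same_card)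
qed

lemma forced_prefix:
  assumes "xs \<in> paths {} n" "k \<le> n" "1 \<le> k" "xs ! (k - 1) = (0,1)"
  shows "j \<le> k - 1 \<Longrightarrow> take j xs = collist j"
proof (induction j)
  case 0 then show ?case by (simp add: collist_def)
next
  case (Suc j)
  have l: "length xs = n" "distinct xs" using assms(1) unfolding paths_def by auto
  have jn: "j < n" using Suc.prems assms by simp
  have "xs ! j \<in> addc ({} \<union> set (take j xs))" by (rule nth_addc[OF assms(1) jn])
  then have "xs ! j \<in> addc (colset j)" using Suc set_collist by simp
  then have "xs ! j \<in> {(j,0), (0,1)}" using addc_colset by blast
  moreover have "xs ! j \<noteq> (0,1)"
  proof
    assume "xs ! j = (0,1)"
    then have "xs ! j = xs ! (k - 1)" using assms(4) by simp
    then have "j = k - 1" using l jn assms nth_eq_iff_index_eq by (metis diff_less less_le_trans zero_less_one)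
    then show False using Suc.prems by simp
  qed
  ultimately have "xs ! j = (j,0)" by blast
  then show ?case using Suc take_Suc_conv_app_nth[of j xs] jn l(1) collist_Suc by simp
qed

lemma split_F:
  assumes "1 \<le> k" "k \<le> n"
  shows "Gs n (k - 1) = Gs n k \<union> {xs \<in> paths {} n. xs ! (k - 1) = (0,1)}"
    "Gs n k \<inter> {xs \<in> paths {} n. xs ! (k - 1) = (0,1)} = {}"
proof -
  obtain k' where k': "k = Suc k'" using assms by (cases k) auto
  show "Gs n (k - 1) = Gs n k \<union> {xs \<in> paths {} n. xs ! (k - 1) = (0,1)}"
  proof (intro set_eqI iffI)
    fix xs assume xs: "xs \<in> Gs n (k - 1)"
    then have p: "xs \<in> paths {} n" and t: "take k' xs = collist k'" unfolding Gs_def k' by auto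
    have l: "length xs = n" using p unfolding paths_def by simp
    have jn: "k' < n" using assms k' by simp
    have "xs ! k' \<in> addc ({} \<union> set (take k' xs))" by (rule nth_addc[OF p jn])
    then have "xs ! k' \<in> addc (colset k')" using t set_collist by simp
    then have "xs ! k' \<in> {(k',0), (0,1)}" using addc_colset by blast
    moreover have "xs ! k' = (k',0) \<Longrightarrow> take k xs = collist k"
      using t take_Suc_conv_app_nth[of k' xs] jn l collist_Suc k' by simp
    ultimately show "xs \<in> Gs n k \<union> {xs \<in> paths {} n. xs ! (k - 1) = (0,1)}"
      using p k' unfolding Gs_def by auto
  next
    fix xs assume xs: "xs \<in> Gs n k \<union> {xs \<in> paths {} n. xs ! (k - 1) = (0,1)}"
    show "xs \<in> Gs n (k - 1)"
    proof (cases "xs \<in> Gs n k")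
      case True
      then have p: "xs \<in> paths {} n" and t: "take k xs = collist k" unfolding Gs_def by auto
      have "take (k - 1) xs = take (k - 1) (take k xs)" by simp
      also have "\<dots> = collist (k - 1)" using t take_collist[of "k - 1" k] by simp
      finally show ?thesis using p unfolding Gs_def by simp
    next
      case False
      then have p: "xs \<in> paths {} n" "xs ! (k - 1) = (0,1)" using xs by auto
      have "take (k - 1) xs = collist (k - 1)" using forced_prefix[OF p(1) assms(2,1) p(2)] by simp
      then show ?thesis using p unfolding Gs_def by simp
    qed
  qed
  show "Gs n k \<inter> {xs \<in> paths {} n. xs ! (k - 1) = (0,1)} = {}"
  proof (rule ccontr)
    assume "Gs n k \<inter> {xs \<in> paths {} n. xs ! (k - 1) = (0,1)} \<noteq> {}"
    then obtain xs where xs: "take k xs = collist k" "xs ! (k - 1) = (0,1)" "xs \<in> paths {} n"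
      unfolding Gs_def by auto
    have "length xs = n" using xs(3) unfolding paths_def by simp
    then have "xs ! k' = take k xs ! k'" using k' assms by simp
    also have "\<dots> = (k', 0)" using xs(1) k' unfolding collist_def by (simp del: upt_Suc)
    finally show False using xs(2) k' by simp
  qed
qed

lemma f_syt_formula:
  assumes "1 \<le> k" "k \<le> n"
  shows "int (f_syt n k) = Pn (colset (k - 1)) (n - (k - 1)) - Pn (colset k) (n - k)"
proof -
  let ?F = "{xs \<in> paths {} n. xs ! (k - 1) = (0,1)}"
  have fin: "finite (paths {} n)" using card_paths[of "{}" n] unfolding valid_def dc_def by simp
  have "card (Gs n (k - 1)) = card (Gs n k) + card ?F"
    unfolding split_F(1)[OF assms] by (rule card_Un_disjoint) (use fin split_F(2)[OF assms] in \<open>auto simp: Gs_def\<close>)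
  then have c: "int (card (Gs n (k - 1))) = int (card (Gs n k)) + int (card ?F)" by simp
  have g: "int (card (Gs n m)) = Pn (colset m) (n - m)" if "m \<le> n" for m
    using card_Gs[OF that] card_paths[OF valid_colset] by simp
  have "k - 1 \<le> n" using assms by simp
  note g1 = g[OF this] and g2 = g[OF assms(2)]
  have "int (card ?F) = Pn (colset (k - 1)) (n - (k - 1)) - Pn (colset k) (n - k)"
    using c g1 g2 by simp
  then show ?thesis using f_syt_paths[OF assms] by simp
qed



lemma binom_nat: "binom (int a) (int i) = int (a choose i)"
  unfolding binom_def by simp

lemma bt_shift: "binom (int a) (int i) * t_inv (int a + 1 - int i) = int ((a choose i) * Tn (Suc a - i))"
proof (cases "i \<le> Suc a")
  case True
  then have "int a + 1 - int i = int (Suc a - i)" by simp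
  then show ?thesis by (simp only: binom_nat t_inv_Tn of_nat_mult)
next
  case False
  then have "a choose i = 0" by simp
  then show ?thesis using binom_nat by simp
qed

lemma bt_plain: "binom (int a) (int i) * t_inv (int a - int i) = int ((a choose i) * Tn (a - i))"
proof (cases "i \<le> a")
  case True
  then have "int a - int i = int (a - i)" by simp
  then show ?thesis by (simp only: binom_nat t_inv_Tn of_nat_mult)
next
  case False
  then have "a choose i = 0" by simp
  then show ?thesis using binom_nat by simp
qed

lemma L1: "(\<Sum>i<Suc k'. (Suc a choose i) * Tn (Suc a - i)) =
   (\<Sum>i<Suc k'. (a choose i) * Tn (Suc a - i)) + (\<Sum>i<k'. (a choose i) * Tn (a - i))"
proof -
  have "(\<Sum>i<Suc k'. (Suc a choose i) * Tn (Suc a - i)) =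
      Tn (Suc a) + (\<Sum>i<k'. ((a choose i) + (a choose Suc i)) * Tn (a - i))"
    by (subst sum.lessThan_Suc_shift) simp
  also have "\<dots> = Tn (Suc a) + (\<Sum>i<k'. (a choose Suc i) * Tn (a - i)) + (\<Sum>i<k'. (a choose i) * Tn (a - i))"
    by (simp add: algebra_simps sum.distrib)
  also have "Tn (Suc a) + (\<Sum>i<k'. (a choose Suc i) * Tn (a - i)) = (\<Sum>i<Suc k'. (a choose i) * Tn (Suc a - i))"
    by (subst sum.lessThan_Suc_shift) simp
  finally show ?thesis .
qed

lemma sum_int_range:
  fixes f :: "int \<Rightarrow> int"
  shows "(\<Sum>j = 0..<int k. f j) = (\<Sum>j<k. f (int j))"
proof -
  have "{0..<int k} = int ` {..<k}"
  proof (intro set_eqI iffI)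
    fix j assume "j \<in> {0..<int k}"
    then have "j = int (nat j)" "nat j < k" by auto
    then show "j \<in> int ` {..<k}" by blast
  qed auto
  then show ?thesis by (simp add: sum.reindex)
qed

theorem theorem3:
  fixes n k :: nat
  assumes "1 \<le> k" and "k \<le> n"
  shows "int (f_syt n k) =
    (\<Sum>j = 0..<int k. binom (int n - int k) (int k - j - 1) * t_inv (int n - 2 * int k + j + 2))
    - binom (int n - int k) (int k - 1) * t_inv (int n - 2 * int k + 1)
    - binom (int n - int k) (int k) * t_inv (int n - 2 * int k)"
proof -
  obtain k' where k': "k = Suc k'" using assms by (cases k) auto
  define a where "a = n - k"
  have na: "n = a + k" using assms a_def by simp
  have ia: "int n - int k = int a" using na by simp
  have Pc: "Pn (colset m) N = int (\<Sum>i\<le>m. (N choose i) * Tn (N - i))" for m N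
    unfolding Pn_colset by (simp only: of_nat_sum of_nat_mult)
  have N2: "(\<Sum>i\<le>Suc k'. (a choose i) * Tn (a - i)) = (\<Sum>i<k'. (a choose i) * Tn (a - i))
      + (a choose k') * Tn (a - k') + (a choose Suc k') * Tn (a - Suc k')"
    by (simp only: sum.atMost_Suc lessThan_Suc_atMost[symmetric] sum.lessThan_Suc)
  have N1: "(\<Sum>i\<le>k'. (Suc a choose i) * Tn (Suc a - i)) =
      (\<Sum>i<Suc k'. (a choose i) * Tn (Suc a - i)) + (\<Sum>i<k'. (a choose i) * Tn (a - i))"
    unfolding lessThan_Suc_atMost[symmetric] by (rule L1)
  have kk: "k - 1 = k'" "n - (k - 1) = Suc a" "n - k = a" "n - k' = Suc a" using k' na by simp_all
  have "int (f_syt n k) = Pn (colset k') (Suc a) - Pn (colset (Suc k')) a"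
    using f_syt_formula[OF assms] unfolding kk k'[symmetric] .
  also have "\<dots> = int (\<Sum>i\<le>k'. (Suc a choose i) * Tn (Suc a - i)) - int (\<Sum>i\<le>Suc k'. (a choose i) * Tn (a - i))"
    unfolding Pc ..
  also have "\<dots> = int (\<Sum>i<Suc k'. (a choose i) * Tn (Suc a - i))
       - int ((a choose k') * Tn (a - k')) - int ((a choose Suc k') * Tn (a - Suc k'))"
    unfolding N1 N2 by simp
  finally have lhs: "int (f_syt n k) = int (\<Sum>i<Suc k'. (a choose i) * Tn (Suc a - i))
       - int ((a choose k') * Tn (a - k')) - int ((a choose Suc k') * Tn (a - Suc k'))" .
  have s: "(\<Sum>j = 0..<int k. binom (int n - int k) (int k - j - 1) * t_inv (int n - 2 * int k + j + 2))
      = int (\<Sum>i<Suc k'. (a choose i) * Tn (Suc a - i))"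
  proof -
    have "(\<Sum>j = 0..<int k. binom (int n - int k) (int k - j - 1) * t_inv (int n - 2 * int k + j + 2))
        = (\<Sum>j<Suc k'. binom (int n - int k) (int k - int j - 1) * t_inv (int n - 2 * int k + int j + 2))"
      unfolding sum_int_range k' by simp
    also have "\<dots> = (\<Sum>j<Suc k'. int ((a choose (Suc k' - Suc j)) * Tn (Suc a - (Suc k' - Suc j))))"
    proof (rule sum.cong[OF refl])
      fix j assume "j \<in> {..<Suc k'}"
      then have j: "j \<le> k'" by simp
      have e1: "int k - int j - 1 = int (Suc k' - Suc j)" using j k' by simp
      have e2: "int n - 2 * int k + int j + 2 = int a + 1 - int (Suc k' - Suc j)" using j k' na by simp
      show "binom (int n - int k) (int k - int j - 1) * t_inv (int n - 2 * int k + int j + 2) =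
          int ((a choose (Suc k' - Suc j)) * Tn (Suc a - (Suc k' - Suc j)))"
        unfolding ia e1 e2 by (rule bt_shift)
    qed
    also have "\<dots> = int (\<Sum>i<Suc k'. (a choose i) * Tn (Suc a - i))"
      unfolding of_nat_sum[symmetric] by (rule arg_cong[where f = int], rule sum.nat_diff_reindex)
    finally show ?thesis .
  qed
  have m1: "binom (int n - int k) (int k - 1) * t_inv (int n - 2 * int k + 1) = int ((a choose k') * Tn (a - k'))"
  proof -
    have "int k - 1 = int k'" "int n - 2 * int k + 1 = int a - int k'" using k' na by simp_all
    then show ?thesis unfolding ia by (simp only: bt_plain)
  qed
  have m2: "binom (int n - int k) (int k) * t_inv (int n - 2 * int k) = int ((a choose k) * Tn (a - k))"
  proof -
    have "int n - 2 * int k = int a - int k" using na by simp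
    then show ?thesis unfolding ia by (simp only: bt_plain)
  qed
  show ?thesis unfolding s m1 m2 lhs[folded k'] by (simp only: k')
qed


end
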